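(* Let $B$ be a singleton board with $n$ columns, padded with columns of height zero on the left so that $\xi_m(B)=\langle z_1,\ldots,z_n\rangle$ has only non-negative entries. For each integer $k$ let $v_k$ be the number of entries of $\xi_m(B)$ equal to $k$, and let $M$ be the greatest integer with $v_M\ne0$. Let $S$ be the set of non-negative multiples of $m$ strictly less than $M$. Let $i$ be the least non-negative integer such that either $v_i>1$, or $v_i=1$ and $i$ is not a multiple of $m$. If $v_s\ge2$ for all $s\in S$ with $s>i$, then $B$ is connected by a sequence of edges in $G_m(B)$ to a board $B'$ with $m$-level root vector $\xi_m(B')=\langle 0,m,2m,\ldots,\lfloor M-1\rfloor_m,M,\ldots,z_n\rangle$; that is, the first $\frac{\lfloor M-1\rfloor_m}{m}+1$ entries of $\xi_m(B')$ are the non-negative multiples of $m$ from $0$ to $\lfloor M-1\rfloor_m$ in increasing order, and the next entry is the first occurrence of the value $M$.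
   Context: Fix an integer $m>0$. A Ferrers board is given by a weakly increasing sequence of non-negative integers $B=(b_1,\ldots,b_n)$ of column heights (cells in column $i$, rows $1,\ldots,b_i$, of the first quadrant); prepending height-$0$ columns on the left does not change the board, and boards are compared with the same number of columns by such padding. The rows are partitioned into levels: level $t$ consists of rows $(t-1)m+1,\ldots,tm$. An $m$-level rook placement of $k$ rooks is a set of $k$ cells of $B$, no two in the same level or the same column; $r_{k,m}(B)$ is their number, and two boards are $m$-level rook equivalent if they have equal $r_{k,m}$ for all $k\ge0$. For an integer $o$, $\lfloor o\rfloor_m$ is the largest multiple of $m$ that is $\le o$. $B$ is singleton if for each $i<n$, $b_i-\lfloor b_i\rfloor_m\ne0$ implies $\lfloor b_i\rfloor_m<\lfloor b_{i+1}\rfloor_m$. The $m$-level root vector of $B$ is $\xi_m(B)=\langle 0-b_1,m-b_2,\ldots,m(n-1)-b_n\rangle$. The $m$-level rook equivalence graph $G_m(B)$ of a singleton board $B$ has as vertices all singleton boards $m$-level rook equivalent to $B$, and $\{B_1,B_2\}$ is an edge iff, written with the same number of columns, $B_1$ and $B_2$ differ in exactly two columns $i,j$, where $B_1$ has $k$ more cells than $B_2$ in column $i$ and $k$ fewer in column $j$, for some $k>0$. *)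

theory Defs
  imports Main
begin

text \<open>A Ferrers board is a list of column heights (column 0 is the leftmost one),
  weakly increasing.  Cells are pairs (column, row), rows numbered from 1.\<close>

definition ferrers :: "nat list \<Rightarrow> bool" where
  "ferrers B \<longleftrightarrow> sorted B"

definition cells :: "nat list \<Rightarrow> (nat \<times> nat) set" where
  "cells B = {(c, r). c < length B \<and> 1 \<le> r \<and> r \<le> B ! c}"

text \<open>Level of row r (rows (t-1)m+1..tm form level t; here levels are 0-indexed).\<close>
definition level :: "nat \<Rightarrow> nat \<Rightarrow> nat" where
  "level m r = (r - 1) div m"

definition rook_placements :: "nat \<Rightarrow> nat list \<Rightarrow> nat \<Rightarrow> (nat \<times> nat) set set" where
  "rook_placements m B k =
     {P. P \<subseteq> cells B \<and> card P = k \<and> inj_on fst P \<and> inj_on (\<lambda>(c, r). level m r) P}"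

definition rook_number :: "nat \<Rightarrow> nat \<Rightarrow> nat list \<Rightarrow> nat" where
  "rook_number k m B = card (rook_placements m B k)"

definition rook_equiv :: "nat \<Rightarrow> nat list \<Rightarrow> nat list \<Rightarrow> bool" where
  "rook_equiv m B1 B2 \<longleftrightarrow> (\<forall>k. rook_number k m B1 = rook_number k m B2)"

definition floor_m :: "nat \<Rightarrow> int \<Rightarrow> int" where
  "floor_m m x = int m * (x div int m)"

definition singleton_board :: "nat \<Rightarrow> nat list \<Rightarrow> bool" where
  "singleton_board m B \<longleftrightarrow> ferrers B \<and>
     (\<forall>i. Suc i < length B \<longrightarrow>
        int (B ! i) - floor_m m (int (B ! i)) \<noteq> 0 \<longrightarrow>
        floor_m m (int (B ! i)) < floor_m m (int (B ! Suc i)))"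

definition root_vector :: "nat \<Rightarrow> nat list \<Rightarrow> int list" where
  "root_vector m B = map (\<lambda>j. int (m * j) - int (B ! j)) [0..<length B]"

definition pad :: "nat \<Rightarrow> nat list \<Rightarrow> nat list" where
  "pad L B = replicate (L - length B) 0 @ B"

definition board_edge :: "nat list \<Rightarrow> nat list \<Rightarrow> bool" where
  "board_edge B1 B2 \<longleftrightarrow>
     (let L = max (length B1) (length B2); C1 = pad L B1; C2 = pad L B2 in
      \<exists>i j k. i < L \<and> j < L \<and> i \<noteq> j \<and> k > 0 \<and>
        C1 ! i = C2 ! i + k \<and> C2 ! j = C1 ! j + k \<and>
        (\<forall>l < L. l \<noteq> i \<longrightarrow> l \<noteq> j \<longrightarrow> C1 ! l = C2 ! l))"

definition G_vertex :: "nat \<Rightarrow> nat list \<Rightarrow> nat list \<Rightarrow> bool" where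
  "G_vertex m B X \<longleftrightarrow> singleton_board m X \<and> rook_equiv m X B"

definition G_edge :: "nat \<Rightarrow> nat list \<Rightarrow> nat list \<Rightarrow> nat list \<Rightarrow> bool" where
  "G_edge m B X Y \<longleftrightarrow> G_vertex m B X \<and> G_vertex m B Y \<and> board_edge X Y"

definition vcount :: "int list \<Rightarrow> int \<Rightarrow> nat" where
  "vcount z k = card {j. j < length z \<and> z ! j = k}"

end

theory Submission
  imports Defs "HOL-Library.Multiset"
begin


lemma finite_cells: "finite (cells X)"
proof -
  have "cells X \<subseteq> {..<length X} \<times> {..Max (set X \<union> {0})}"
  proof
    fix x assume "x \<in> cells X"
    then obtain c r where x: "x = (c,r)" "c < length X" "r \<le> X ! c" unfolding cells_def by auto
    have "X ! c \<le> Max (set X \<union> {0})" using x(2) by (intro Max_ge) auto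
    then have "r \<le> Max (set X \<union> {0})" using x(3) by linarith
    then show "x \<in> {..<length X} \<times> {..Max (set X \<union> {0})}" using x by auto
  qed
  then show ?thesis by (rule finite_subset) auto
qed

lemma finite_RP: "finite (rook_placements m X k)"
proof -
  have "rook_placements m X k \<subseteq> Pow (cells X)" unfolding rook_placements_def by auto
  then show ?thesis using finite_cells by (meson finite_Pow_iff finite_subset)
qed

lemma RP0: "rook_placements m X 0 = {{}}"
  unfolding rook_placements_def using finite_cells
  by (auto intro: finite_subset simp: card_eq_0_iff)

lemma rook0: "rook_number 0 m X = 1"
  unfolding rook_number_def RP0 by simp

lemma RP_big: assumes "k > length X" shows "rook_placements m X k = {}"
proof (rule ccontr)
  assume "rook_placements m X k \<noteq> {}"
  then obtain P where P: "P \<subseteq> cells X" "card P = k" "inj_on fst P"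
    unfolding rook_placements_def by auto
  have "fst ` P \<subseteq> {..<length X}" using P(1) unfolding cells_def by auto
  then have "card (fst ` P) \<le> length X" by (metis card_lessThan card_mono finite_lessThan)
  moreover have "card (fst ` P) = k" using P by (simp add: card_image)
  ultimately show False using assms by simp
qed

lemma rook_big: "k > length X \<Longrightarrow> rook_number k m X = 0"
  unfolding rook_number_def using RP_big by simp

lemma cells_snoc: "cells (X @ [b]) = cells X \<union> {(length X, r) | r. 1 \<le> r \<and> r \<le> b}"
  unfolding cells_def by (auto simp: nth_append less_Suc_eq)

lemma cells_fst: "x \<in> cells X \<Longrightarrow> fst x < length X"
  unfolding cells_def by auto

definition Rows :: "nat \<Rightarrow> nat \<Rightarrow> (nat \<times> nat) set \<Rightarrow> nat set" where
  "Rows m b P = {r. 1 \<le> r \<and> r \<le> b \<and> level m r \<notin> (\<lambda>(c, r). level m r) ` P}"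

lemma level_iff: "m > 0 \<Longrightarrow> 1 \<le> r \<Longrightarrow> level m r = l \<longleftrightarrow> r \<in> {l*m+1..l*m+m}"
proof -
  assume m: "m > 0" and r: "1 \<le> r"
  have "(r - 1) div m = l \<longleftrightarrow> l * m \<le> r - 1 \<and> r - 1 < l * m + m"
    using m by (metis add.commute div_nat_eqI dividend_less_div_times
        mult.commute mult_Suc_right times_div_less_eq_dividend)
  then show ?thesis unfolding level_def using r by (auto simp: le_diff_conv2)
qed

lemma card_Rows:
  assumes m: "m > 0" and P: "P \<in> rook_placements m X k"
    and H: "\<forall>(c,r)\<in>cells X. m * ((r - 1) div m) + m \<le> b"
  shows "card (Rows m b P) = b - m * k" "m * k \<le> b"
proof -
  define LV where "LV = (\<lambda>(c, r). level m r) ` P"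
  have Psub: "P \<subseteq> cells X" and cP: "card P = k" and inj: "inj_on (\<lambda>(c, r). level m r) P"
    using P unfolding rook_placements_def by auto
  have finP: "finite P" using Psub finite_cells finite_subset by blast
  have cLV: "card LV = k" unfolding LV_def using inj cP by (simp add: card_image)
  have finLV: "finite LV" unfolding LV_def using finP by simp
  define U where "U = {r. 1 \<le> r \<and> r \<le> b \<and> level m r \<in> LV}"
  have LVb: "l * m + m \<le> b" if lv: "l \<in> LV" for l
  proof -
    obtain c r where cr: "(c, r) \<in> P" "l = level m r" using lv unfolding LV_def by force
    then have "(c, r) \<in> cells X" using Psub by auto
    then have "m * ((r - 1) div m) + m \<le> b" using H by auto
    then show ?thesis using cr(2) unfolding level_def by (simp add: mult.commute)
  qed
  have U_eq: "U = (\<Union>l\<in>LV. {l*m+1..l*m+m})"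
  proof
    show "U \<subseteq> (\<Union>l\<in>LV. {l*m+1..l*m+m})"
    proof
      fix r assume "r \<in> U"
      then have r: "1 \<le> r" "level m r \<in> LV" unfolding U_def by auto
      then show "r \<in> (\<Union>l\<in>LV. {l*m+1..l*m+m})" using level_iff[OF m r(1)] by blast
    qed
  next
    show "(\<Union>l\<in>LV. {l*m+1..l*m+m}) \<subseteq> U"
    proof
      fix r assume "r \<in> (\<Union>l\<in>LV. {l*m+1..l*m+m})"
      then obtain l where l: "l \<in> LV" "r \<in> {l*m+1..l*m+m}" by auto
      then have "1 \<le> r" by auto
      then have "level m r = l" using level_iff[OF m] l(2) by blast
      moreover have "r \<le> b" using l LVb[OF l(1)] by auto
      ultimately show "r \<in> U" unfolding U_def using l \<open>1 \<le> r\<close> by auto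
    qed
  qed
  have cU: "card U = m * k"
  proof -
    have "card (\<Union>l\<in>LV. {l*m+1..l*m+m}) = (\<Sum>l\<in>LV. card {l*m+1..l*m+m})"
    proof (rule card_UN_disjoint[OF finLV])
      show "\<forall>i\<in>LV. finite {i * m + 1..i * m + m}" by simp
      show "\<forall>i\<in>LV. \<forall>j\<in>LV. i \<noteq> j \<longrightarrow> {i * m + 1..i * m + m} \<inter> {j * m + 1..j * m + m} = {}"
      proof (intro ballI impI)
        fix i j :: nat assume "i \<noteq> j"
        show "{i * m + 1..i * m + m} \<inter> {j * m + 1..j * m + m} = {}"
        proof (rule ccontr)
          assume "{i * m + 1..i * m + m} \<inter> {j * m + 1..j * m + m} \<noteq> {}"
          then obtain r where r: "r \<in> {i * m + 1..i * m + m}" "r \<in> {j * m + 1..j * m + m}" by blast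
          then have "1 \<le> r" by auto
          then have "level m r = i" "level m r = j" using level_iff[OF m] r by blast+
          then show False using \<open>i \<noteq> j\<close> by simp
        qed
      qed
    qed
    then show ?thesis unfolding U_eq using cLV by simp
  qed
  have Usub: "U \<subseteq> {1..b}" unfolding U_def by auto
  have Rows_eq: "Rows m b P = {1..b} - U" unfolding Rows_def U_def LV_def by auto
  show "card (Rows m b P) = b - m * k" unfolding Rows_eq
    using card_Diff_subset[OF _ Usub] cU by (simp add: finite_subset[OF Usub])
  show "m * k \<le> b" using card_mono[OF _ Usub] cU by simp
qed

lemma RP_snoc:
  fixes X :: "nat list"
  defines "n \<equiv> length X"
  shows "rook_placements m (X @ [b]) (Suc k) = rook_placements m X (Suc k) \<union>
     (\<lambda>(P, r). insert (n, r) P) ` (SIGMA P:rook_placements m X k. Rows m b P)"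
    (is "?L = ?A \<union> ?B")
proof
  show "?L \<subseteq> ?A \<union> ?B"
  proof
    fix P assume P: "P \<in> ?L"
    have Psub: "P \<subseteq> cells (X @ [b])" and cP: "card P = Suc k" and inj1: "inj_on fst P"
      and inj2: "inj_on (\<lambda>(c, r). level m r) P" using P unfolding rook_placements_def by auto
    have finP: "finite P" using Psub finite_cells finite_subset by blast
    show "P \<in> ?A \<union> ?B"
    proof (cases "\<exists>x\<in>P. fst x = n")
      case False
      have "P \<subseteq> cells X"
      proof
        fix x assume "x \<in> P"
        then have "x \<in> cells X \<or> fst x = n" using Psub unfolding cells_snoc n_def by auto
        then show "x \<in> cells X" using False \<open>x \<in> P\<close> by auto
      qed
      then have "P \<in> ?A" using cP inj1 inj2 unfolding rook_placements_def by auto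
      then show ?thesis by blast
    next
      case True
      then obtain r where x0: "(n, r) \<in> P" by auto
      define P' where "P' = P - {(n, r)}"
      have P'sub: "P' \<subseteq> cells X"
      proof
        fix y assume y: "y \<in> P'"
        then have "y \<in> P" "y \<noteq> (n, r)" unfolding P'_def by auto
        then have "fst y \<noteq> n" using inj1 x0 by (metis fst_conv inj_on_def)
        then show "y \<in> cells X" using Psub \<open>y \<in> P\<close> unfolding cells_snoc n_def by auto
      qed
      have cP': "card P' = k" unfolding P'_def using cP finP x0 by simp
      have i1: "inj_on fst P'" unfolding P'_def by (rule inj_on_subset[OF inj1]) auto
      have i2: "inj_on (\<lambda>(c, r). level m r) P'" unfolding P'_def by (rule inj_on_subset[OF inj2]) auto
      have P'RP: "P' \<in> rook_placements m X k" unfolding rook_placements_def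
        using P'sub cP' i1 i2 by simp
      have "(n, r) \<in> cells (X @ [b])" using x0 Psub by auto
      then have rb: "1 \<le> r" "r \<le> b" unfolding cells_def n_def by (auto simp: nth_append)
      have "level m r \<notin> (\<lambda>(c, r). level m r) ` P'"
      proof
        assume "level m r \<in> (\<lambda>(c, r). level m r) ` P'"
        then obtain c' r' where cr: "(c', r') \<in> P'" "level m r = level m r'" by force
        then have "(c', r') \<in> P" "(c', r') \<noteq> (n, r)" unfolding P'_def by auto
        then show False using inj2 x0 cr(2) unfolding inj_on_def by fastforce
      qed
      then have "r \<in> Rows m b P'" unfolding Rows_def using rb by auto
      moreover have "P = insert (n, r) P'" unfolding P'_def using x0 by auto
      ultimately have "P \<in> ?B" using P'RP by force
      then show ?thesis by blast
    qed
  qed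
next
  show "?A \<union> ?B \<subseteq> ?L"
  proof
    fix P assume "P \<in> ?A \<union> ?B"
    then show "P \<in> ?L"
    proof
      assume "P \<in> ?A"
      then show ?thesis unfolding rook_placements_def cells_snoc by auto
    next
      assume "P \<in> ?B"
      then obtain P' r where P': "P' \<in> rook_placements m X k" "r \<in> Rows m b P'" "P = insert (n, r) P'"
        by auto
      have P'sub: "P' \<subseteq> cells X" and cP': "card P' = k" and inj1: "inj_on fst P'"
        and inj2: "inj_on (\<lambda>(c, r). level m r) P'" using P'(1) unfolding rook_placements_def by auto
      have finP': "finite P'" using P'sub finite_cells finite_subset by blast
      have nin: "(n, r) \<notin> P'" using P'sub cells_fst unfolding n_def by fastforce
      have nfst: "n \<notin> fst ` P'" using P'sub cells_fst unfolding n_def by fastforce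
      have "P \<subseteq> cells (X @ [b])" using P' P'sub unfolding cells_snoc Rows_def n_def by auto
      moreover have "card P = Suc k" using P'(3) nin finP' cP' by simp
      moreover have "inj_on fst P" using P'(3) inj1 nfst nin by auto
      moreover have "inj_on (\<lambda>(c, r). level m r) P" using P'(2,3) inj2 nin unfolding Rows_def by auto
      ultimately show ?thesis unfolding rook_placements_def by auto
    qed
  qed
qed

lemma RP_snoc_disj:
  fixes X :: "nat list"
  defines "n \<equiv> length X"
  shows "rook_placements m X (Suc k) \<inter>
     (\<lambda>(P, r). insert (n, r) P) ` (SIGMA P:rook_placements m X k. Rows m b P) = {}"
proof -
  have "\<forall>x\<in>P. fst x < n" if "P \<in> rook_placements m X j" for P j
    using that cells_fst unfolding rook_placements_def n_def by blast
  then show ?thesis by fastforce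
qed

lemma RP_snoc_inj:
  fixes X :: "nat list"
  defines "n \<equiv> length X"
  shows "inj_on (\<lambda>(P, r). insert (n, r) P) (SIGMA P:rook_placements m X k. Rows m b P)"
proof (rule inj_onI)
  fix a1 a2 assume a1: "a1 \<in> (SIGMA P:rook_placements m X k. Rows m b P)"
    and a2: "a2 \<in> (SIGMA P:rook_placements m X k. Rows m b P)"
    and eq: "(\<lambda>(P, r). insert (n, r) P) a1 = (\<lambda>(P, r). insert (n, r) P) a2"
  obtain P1 r1 where 1: "a1 = (P1, r1)" "P1 \<in> rook_placements m X k" using a1 by auto
  obtain P2 r2 where 2: "a2 = (P2, r2)" "P2 \<in> rook_placements m X k" using a2 by auto
  have f1: "\<forall>x\<in>P1. fst x < n" and f2: "\<forall>x\<in>P2. fst x < n"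
    using 1 2 cells_fst unfolding rook_placements_def n_def by blast+
  have e: "insert (n, r1) P1 = insert (n, r2) P2" using eq 1 2 by simp
  have "P1 = {x \<in> insert (n, r1) P1. fst x \<noteq> n}" using f1 by auto
  also have "\<dots> = {x \<in> insert (n, r2) P2. fst x \<noteq> n}" using e by simp
  also have "\<dots> = P2" using f2 by auto
  finally have "P1 = P2" .
  moreover have "r1 = r2" using e f2 by (metis fst_conv insertE insertI1 less_irrefl snd_conv)
  ultimately show "a1 = a2" using 1 2 by simp
qed

lemma rook_rec:
  assumes m: "m > 0" and H: "\<forall>(c,r)\<in>cells X. m * ((r - 1) div m) + m \<le> b"
  shows "int (rook_number (Suc k) m (X @ [b])) =
    int (rook_number (Suc k) m X) + int (rook_number k m X) * (int b - int (m * k))"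
proof -
  let ?S = "(SIGMA P:rook_placements m X k. Rows m b P)"
  have fS: "finite ?S" using finite_RP by (rule finite_SigmaI) (simp add: Rows_def)
  have "rook_number (Suc k) m (X @ [b]) = rook_number (Suc k) m X + card ?S"
    unfolding rook_number_def RP_snoc
    by (subst card_Un_disjoint) (use finite_RP fS RP_snoc_disj RP_snoc_inj in \<open>auto simp: card_image\<close>)
  moreover have "card ?S = (\<Sum>P\<in>rook_placements m X k. card (Rows m b P))"
    by (rule card_SigmaI) (auto simp: finite_RP Rows_def)
  moreover have "(\<Sum>P\<in>rook_placements m X k. card (Rows m b P)) = rook_number k m X * (b - m * k)"
    using card_Rows(1)[OF m _ H] unfolding rook_number_def by simp
  moreover have "int (rook_number k m X * (b - m * k)) = int (rook_number k m X) * (int b - int (m * k))"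
  proof (cases "rook_placements m X k = {}")
    case True then show ?thesis unfolding rook_number_def by simp
  next
    case False
    then obtain P where "P \<in> rook_placements m X k" by auto
    then have "m * k \<le> b" using card_Rows(2)[OF m _ H] by blast
    then show ?thesis by (simp add: of_nat_diff)
  qed
  ultimately show ?thesis by simp
qed

lemma rook_rec_all:
  assumes m: "m > 0" and H: "\<forall>(c,r)\<in>cells X. m * ((r - 1) div m) + m \<le> b"
  shows "int (rook_number k m (X @ [b])) =
    int (rook_number k m X) + (if k = 0 then 0 else int (rook_number (k - 1) m X) * (int b - int (m * (k - 1))))"
  using rook_rec[OF m H, of "k - 1"] by (cases k) (auto simp: rook0)

definition ff :: "nat \<Rightarrow> nat \<Rightarrow> int \<Rightarrow> int" where
  "ff m j x = (\<Prod>s<j. x - int (m * s))"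

definition Phi :: "nat \<Rightarrow> nat list \<Rightarrow> int \<Rightarrow> int" where
  "Phi m X x = (\<Sum>k\<le>length X. int (rook_number k m X) * ff m (length X - k) x)"

lemma ff_Suc: "ff m (Suc j) x = ff m j x * (x - int (m * j))"
  unfolding ff_def by simp

lemma Phi_snoc:
  assumes m: "m > 0" and H: "\<forall>(c,r)\<in>cells X. m * ((r - 1) div m) + m \<le> b"
  shows "Phi m (X @ [b]) x = Phi m X x * (x + int b - int (m * length X))"
proof -
  let ?n = "length X"
  let ?r = "\<lambda>k. int (rook_number k m X)"
  have "Phi m (X @ [b]) x = (\<Sum>k\<le>Suc ?n. (?r k + (if k = 0 then 0 else ?r (k - 1) * (int b - int (m * (k - 1))))) * ff m (Suc ?n - k) x)"
    unfolding Phi_def using rook_rec_all[OF m H] by simp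
  also have "\<dots> = (\<Sum>k\<le>Suc ?n. ?r k * ff m (Suc ?n - k) x) +
      (\<Sum>k\<le>Suc ?n. (if k = 0 then 0 else ?r (k - 1) * (int b - int (m * (k - 1)))) * ff m (Suc ?n - k) x)"
    by (simp add: distrib_right sum.distrib)
  also have "(\<Sum>k\<le>Suc ?n. ?r k * ff m (Suc ?n - k) x) = (\<Sum>k\<le>?n. ?r k * ff m (Suc ?n - k) x)"
    using rook_big[of X "Suc ?n" m] by simp
  also have "(\<Sum>k\<le>?n. ?r k * ff m (Suc ?n - k) x) = (\<Sum>k\<le>?n. ?r k * ff m (?n - k) x * (x - int (m * (?n - k))))"
    by (rule sum.cong) (auto simp: Suc_diff_le ff_Suc)
  also have "(\<Sum>k\<le>Suc ?n. (if k = 0 then 0 else ?r (k - 1) * (int b - int (m * (k - 1)))) * ff m (Suc ?n - k) x)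
      = (\<Sum>k\<le>?n. ?r k * (int b - int (m * k)) * ff m (?n - k) x)"
    by (subst sum.atMost_Suc_shift) simp
  also have "(\<Sum>k\<le>?n. ?r k * ff m (?n - k) x * (x - int (m * (?n - k)))) + (\<Sum>k\<le>?n. ?r k * (int b - int (m * k)) * ff m (?n - k) x)
     = (\<Sum>k\<le>?n. ?r k * ff m (?n - k) x * (x + int b - int (m * ?n)))"
  proof -
    have "\<And>k. k \<le> ?n \<Longrightarrow> ?r k * ff m (?n - k) x * (x - int (m * (?n - k))) + ?r k * (int b - int (m * k)) * ff m (?n - k) x
       = ?r k * ff m (?n - k) x * (x + int b - int (m * ?n))"
    proof -
      fix k assume "k \<le> ?n"
      then have "int (m * (?n - k)) = int (m * ?n) - int (m * k)" by (simp add: diff_mult_distrib2 of_nat_diff)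
      moreover have e: "\<And>R F M K. R * F * (x - (M - K)) + R * (int b - K) * F = R * F * (x + int b - M)"
        by (simp add: algebra_simps)
      ultimately show "?r k * ff m (?n - k) x * (x - int (m * (?n - k))) + ?r k * (int b - int (m * k)) * ff m (?n - k) x
       = ?r k * ff m (?n - k) x * (x + int b - int (m * ?n))" by (simp only:)
    qed
    then show ?thesis by (simp add: sum.distrib[symmetric])
  qed
  also have "\<dots> = Phi m X x * (x + int b - int (m * ?n))"
    unfolding Phi_def by (simp add: sum_distrib_right)
  finally show ?thesis .
qed

lemma ff_zero: "t < j \<Longrightarrow> ff m j (int (m * t)) = 0"
  unfolding ff_def by (rule prod_zero) auto

lemma ff_nz: "m > 0 \<Longrightarrow> ff m t (int (m * t)) \<noteq> 0"
  unfolding ff_def by (subst prod_zero_iff) auto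

lemma ff_inv:
  fixes a c :: "nat \<Rightarrow> int"
  assumes m: "m > 0" and eq: "\<forall>x. (\<Sum>k\<le>n. a k * ff m (n - k) x) = (\<Sum>k\<le>n. c k * ff m (n - k) x)"
  shows "\<forall>k\<le>n. a k = c k"
proof -
  define d where "d k = a k - c k" for k
  have z: "(\<Sum>k\<le>n. d k * ff m (n - k) x) = 0" for x
    using eq unfolding d_def by (simp add: left_diff_distrib sum_subtractf)
  have main: "t \<le> n \<Longrightarrow> d (n - t) = 0" for t
  proof (induction t rule: less_induct)
    case (less t)
    have "(\<Sum>k\<le>n. d k * ff m (n - k) (int (m * t))) = d (n - t) * ff m t (int (m * t))"
    proof (rule sum.remove[THEN trans])
      show "finite {..n}" by simp
      show "n - t \<in> {..n}" by simp
      have "d k * ff m (n - k) (int (m * t)) = 0" if "k \<in> {..n} - {n - t}" for k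
      proof (cases "k < n - t")
        case True then show ?thesis using ff_zero[of t "n - k" m] by simp
      next
        case False
        with that have "n - k < t" "k \<le> n" by auto
        then have "d (n - (n - k)) = 0" using less.IH[of "n - k"] less.prems by simp
        then show ?thesis using \<open>k \<le> n\<close> by simp
      qed
      then have "(\<Sum>k\<in>{..n} - {n - t}. d k * ff m (n - k) (int (m * t))) = 0"
        by (intro sum.neutral) blast
      then show "d (n - t) * ff m (n - (n - t)) (int (m * t)) + (\<Sum>k\<in>{..n} - {n - t}. d k * ff m (n - k) (int (m * t))) =
        d (n - t) * ff m t (int (m * t))" using less.prems by simp
    qed
    then have "d (n - t) * ff m t (int (m * t)) = 0" using z by simp
    then show ?case using ff_nz[OF m] by simp
  qed
  show ?thesis
  proof (intro allI impI)
    fix k assume "k \<le> n"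
    then have "d (n - (n - k)) = 0" using main[of "n - k"] by simp
    then show "a k = c k" using \<open>k \<le> n\<close> unfolding d_def by simp
  qed
qed



definition Fm :: "nat \<Rightarrow> int \<Rightarrow> int" where
  "Fm m x = int m * (x div int m) + int m"

definition bd :: "nat \<Rightarrow> int list \<Rightarrow> nat list" where
  "bd m z = map (\<lambda>j. nat (int (m * j) - z ! j)) [0..<length z]"

definition Q :: "nat \<Rightarrow> int list \<Rightarrow> bool" where
  "Q m z \<longleftrightarrow> (\<forall>j<length z. z ! j \<le> int (m * j)) \<and> (\<forall>j. Suc j < length z \<longrightarrow> z ! Suc j \<le> Fm m (z ! j))"

lemma Fm_gt: "m > 0 \<Longrightarrow> x < Fm m x"
proof -
  assume m: "m > 0"
  have "int m * (x div int m) + x mod int m = x" by (rule mult_div_mod_eq)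
  moreover have "x mod int m < int m" using m by simp
  ultimately show ?thesis unfolding Fm_def by linarith
qed

lemma Fm_le: "m > 0 \<Longrightarrow> Fm m x \<le> x + int m"
proof -
  assume m: "m > 0"
  have "int m * (x div int m) + x mod int m = x" by (rule mult_div_mod_eq)
  moreover have "x mod int m \<ge> 0" using m by simp
  ultimately show ?thesis unfolding Fm_def by linarith
qed

lemma Fm_mono: "m > 0 \<Longrightarrow> x \<le> y \<Longrightarrow> Fm m x \<le> Fm m y"
  unfolding Fm_def by (simp add: zdiv_mono1)

lemma bd_length[simp]: "length (bd m z) = length z"
  unfolding bd_def by simp

lemma bd_nth: "j < length z \<Longrightarrow> bd m z ! j = nat (int (m * j) - z ! j)"
  unfolding bd_def by simp

lemma bd_snoc: "bd m (z @ [y]) = bd m z @ [nat (int (m * length z) - y)]"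
  unfolding bd_def by (auto simp: nth_append intro!: nth_equalityI)

lemma Q_butlast: assumes "Q m (z @ [y])" shows "Q m z"
proof -
  have a: "\<forall>j<Suc (length z). (z @ [y]) ! j \<le> int (m * j)"
    and b: "\<forall>j. Suc j < Suc (length z) \<longrightarrow> (z @ [y]) ! Suc j \<le> Fm m ((z @ [y]) ! j)"
    using assms unfolding Q_def by auto
  show ?thesis unfolding Q_def
  proof (intro conjI allI impI)
    fix j assume "j < length z" then show "z ! j \<le> int (m * j)"
      using a[rule_format, of j] by (simp add: nth_append)
  next
    fix j assume "Suc j < length z" then show "z ! Suc j \<le> Fm m (z ! j)"
      using b[rule_format, of j] by (simp add: nth_append)
  qed
qed

lemma arith1:
  fixes R z' N :: int
  assumes m: "m > 0" and h: "R + 1 + z' \<le> int m * N"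
  shows "int m * (R div int m) + int m \<le> int m * N - int m * (z' div int m)"
proof -
  define q1 s1 q2 s2 where "q1 = R div int m" "s1 = R mod int m" "q2 = z' div int m" "s2 = z' mod int m"
  have R: "R = int m * q1 + s1" and z: "z' = int m * q2 + s2" unfolding q1_s1_q2_s2_def by simp_all
  have s: "0 \<le> s1" "0 \<le> s2" using m unfolding q1_s1_q2_s2_def by simp_all
  have "int m * (q1 + q2) < int m * N" using h R z s by (simp add: algebra_simps)
  then have "q1 + q2 < N" using m by (simp add: mult_less_cancel_left)
  then have "q1 + q2 + 1 \<le> N" by simp
  then have "int m * (q1 + q2 + 1) \<le> int m * N" using m by (simp add: mult_left_mono)
  then show ?thesis unfolding q1_s1_q2_s2_def[symmetric] by (simp add: algebra_simps)
qed

lemma Q_mono: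
  assumes m: "m > 0" and Q: "Q m z" and cj: "c \<le> j" "j < length z"
  shows "int (m * c) - z ! c \<le> int (m * j) - z ! j"
  using cj
proof (induction j)
  case 0 then show ?case by simp
next
  case (Suc j)
  have "z ! Suc j \<le> Fm m (z ! j)" using Q Suc.prems unfolding Q_def by auto
  then have "z ! Suc j \<le> z ! j + int m" using Fm_le[OF m] by (meson order_trans)
  then have "int (m * j) - z ! j \<le> int (m * Suc j) - z ! Suc j" by simp
  then show ?case
  proof (cases "c = Suc j")
    case False then show ?thesis using Suc \<open>int (m * j) - z ! j \<le> _\<close> by simp
  qed simp
qed

lemma Phi_prod:
  assumes m: "m > 0"
  shows "Q m z \<Longrightarrow> Phi m (bd m z) x = (\<Prod>j<length z. x - z ! j)"
proof (induction z rule: rev_induct)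
  case Nil
  then show ?case unfolding Phi_def bd_def ff_def by (simp add: rook0)
next
  case (snoc y z)
  let ?n = "length z"
  have Qz: "Q m z" using Q_butlast snoc.prems by blast
  have yle: "y \<le> int (m * ?n)" using snoc.prems unfolding Q_def by (auto simp: nth_append)
  define b where "b = nat (int (m * ?n) - y)"
  have bi: "int b = int (m * ?n) - y" unfolding b_def using yle by simp
  have H: "\<forall>(c,r)\<in>cells (bd m z). m * ((r - 1) div m) + m \<le> b"
  proof (intro ballI, clarify)
    fix c r assume cr: "(c, r) \<in> cells (bd m z)"
    then have c: "c < ?n" "1 \<le> r" "r \<le> nat (int (m * c) - z ! c)" unfolding cells_def by (auto simp: bd_nth)
    then have n1: "?n = Suc (?n - 1)" by simp
    define z' where "z' = z ! (?n - 1)"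
    have "int (m * c) - z ! c \<le> int (m * (?n - 1)) - z'"
      unfolding z'_def using Q_mono[OF m Qz, of c "?n - 1"] c by simp
    then have rle: "int r \<le> int (m * (?n - 1)) - z'" using c by simp
    have "(z @ [y]) ! Suc (?n - 1) \<le> Fm m ((z @ [y]) ! (?n - 1))"
      using snoc.prems n1 unfolding Q_def by (metis length_append_singleton lessI)
    then have y': "y \<le> Fm m z'" unfolding z'_def using n1 by (simp add: nth_append)
    have "int (r - 1) + 1 + z' \<le> int m * int (?n - 1)" using rle c(2) by simp
    from arith1[OF m this]
    have "int m * (int (r - 1) div int m) + int m \<le> int m * int (?n - 1) - int m * (z' div int m)" .
    also have "\<dots> \<le> int b" using y' bi c(1) unfolding Fm_def
      by (simp add: of_nat_diff algebra_simps)
    finally have "int (m * ((r - 1) div m) + m) \<le> int b" by (simp add: zdiv_int)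
    then show "m * ((r - 1) div m) + m \<le> b" by linarith
  qed
  have "Phi m (bd m (z @ [y])) x = Phi m (bd m z) x * (x + int b - int (m * ?n))"
    unfolding bd_snoc b_def[symmetric] using Phi_snoc[OF m H] by simp
  also have "\<dots> = (\<Prod>j<?n. x - z ! j) * (x - y)" using snoc.IH[OF Qz] bi by simp
  also have "\<dots> = (\<Prod>j<length (z @ [y]). x - (z @ [y]) ! j)"
    by (simp add: nth_append)
  finally show ?case .
qed

lemma prod_nth_mset: "(\<Prod>j<length z. f (z ! j)) = prod_mset (image_mset f (mset z))"
proof -
  have "(\<Prod>j<length z. f (z ! j)) = prod_list (map f z)"
    by (simp add: prod.list_conv_set_nth atLeast0LessThan)
  also have "\<dots> = prod_mset (mset (map f z))" by (rule prod_mset_prod_list[symmetric])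
  finally show ?thesis by simp
qed

lemma rook_equiv_Q:
  assumes m: "m > 0" and Q1: "Q m z1" and Q2: "Q m z2" and ms: "mset z1 = mset z2"
  shows "rook_equiv m (bd m z1) (bd m z2)"
proof -
  have len: "length z1 = length z2" using ms by (metis size_mset)
  let ?n = "length z1"
  have "\<forall>x. Phi m (bd m z1) x = Phi m (bd m z2) x"
    using Phi_prod[OF m Q1] Phi_prod[OF m Q2] prod_nth_mset[of "\<lambda>y. _ - y"] ms by metis
  then have "\<forall>x. (\<Sum>k\<le>?n. int (rook_number k m (bd m z1)) * ff m (?n - k) x) =
      (\<Sum>k\<le>?n. int (rook_number k m (bd m z2)) * ff m (?n - k) x)"
    unfolding Phi_def using len by simp
  from ff_inv[OF m this] have le: "\<forall>k\<le>?n. rook_number k m (bd m z1) = rook_number k m (bd m z2)" by simp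
  show ?thesis unfolding rook_equiv_def
  proof
    fix k show "rook_number k m (bd m z1) = rook_number k m (bd m z2)"
    proof (cases "k \<le> ?n")
      case True then show ?thesis using le by simp
    next
      case False then show ?thesis using rook_big[of "bd m z1" k m] rook_big[of "bd m z2" k m] len by simp
    qed
  qed
qed



lemma div_decomp:
  fixes k s M :: int
  assumes "0 \<le> s" "s < M"
  shows "(M * k + s) div M = k"
proof -
  have "M > 0" using assms by simp
  then show ?thesis using assms by (simp add: add.commute div_pos_pos_trivial)
qed

lemma pair_equiv:
  fixes a b M :: int
  assumes M: "M > 0"
  shows "(a \<le> b \<and> (a - M * (a div M) \<noteq> 0 \<longrightarrow> M * (a div M) < M * (b div M))) \<longleftrightarrow> 0 \<le> b + M * ((- a) div M)"
proof -
  define q r where "q = a div M" "r = a mod M"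
  have a: "a = M * q + r" unfolding q_r_def by simp
  have r: "0 \<le> r" "r < M" unfolding q_r_def using M by simp_all
  define q' r' where "q' = b div M" "r' = b mod M"
  have b: "b = M * q' + r'" unfolding q'_r'_def by simp
  have r': "0 \<le> r'" "r' < M" unfolding q'_r'_def using M by simp_all
  have adm: "a div M = q" unfolding q_r_def by simp
  have bdm: "b div M = q'" unfolding q'_r'_def by simp
  show ?thesis
  proof (cases "r = 0")
    case True
    have e: "- a = M * (- q)" using a True by simp
    have "M \<noteq> 0" using M by simp
    then have "(M * (- q)) div M = - q" by (rule nonzero_mult_div_cancel_left)
    then have "(- a) div M = - q" by (simp only: e)
    then show ?thesis using True a adm by (simp add: algebra_simps)
  next
    case False
    have "- a = M * (- q - 1) + (M - r)" using a by (simp add: algebra_simps)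
    then have na: "(- a) div M = - q - 1" using div_decomp[of "M - r" M "- q - 1"] r False by simp
    have "(M * q < M * q') \<longleftrightarrow> q < q'" using M by simp
    also have "\<dots> \<longleftrightarrow> M * (q + 1) \<le> b"
    proof
      assume "q < q'"
      then have "q + 1 \<le> q'" by simp
      then have "M * (q + 1) \<le> M * q'" using M by (simp add: mult_left_mono)
      then show "M * (q + 1) \<le> b" using b r' by linarith
    next
      assume h: "M * (q + 1) \<le> b"
      show "q < q'"
      proof (rule ccontr)
        assume "\<not> q < q'"
        then have "q' \<le> q" by simp
        then have "M * q' \<le> M * q" using M by (simp add: mult_left_mono)
        moreover have "M * (q + 1) = M * q + M" by (simp add: algebra_simps)
        ultimately show False using h b r' by linarith
      qed
    qed
    finally have e: "(M * q < M * q') \<longleftrightarrow> M * (q + 1) \<le> b" .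
    have "a - M * (a div M) \<noteq> 0" using a adm False by simp
    moreover have "M * (q + 1) \<le> b \<Longrightarrow> a \<le> b" using a r by (simp add: algebra_simps)
    moreover have "b + M * ((- a) div M) = b - M * (q + 1)" by (simp add: na algebra_simps)
    ultimately show ?thesis using e adm bdm by auto
  qed
qed

lemma pairZ:
  fixes a b :: nat
  assumes m: "m > 0"
  shows "(int a \<le> int b \<and> (int a - floor_m m (int a) \<noteq> 0 \<longrightarrow> floor_m m (int a) < floor_m m (int b)))
    \<longleftrightarrow> int (m * Suc j) - int b \<le> Fm m (int (m * j) - int a)"
proof -
  have M: "int m > 0" using m by simp
  have "(int (m * j) - int a) div int m = (- int a) div int m + int j"
  proof -
    have "int (m * j) - int a = - int a + int m * int j" by simp
    then have "(int (m * j) - int a) div int m = (- int a + int m * int j) div int m" by simp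
    also have "\<dots> = int j + (- int a) div int m" using M by (subst div_mult_self2) simp_all
    finally show ?thesis by simp
  qed
  then have "Fm m (int (m * j) - int a) = int m * ((- int a) div int m) + int m * int j + int m"
    unfolding Fm_def by (simp add: algebra_simps)
  then have "int (m * Suc j) - int b \<le> Fm m (int (m * j) - int a) \<longleftrightarrow> 0 \<le> int b + int m * ((- int a) div int m)"
    by (simp add: algebra_simps)
  then show ?thesis using pair_equiv[OF M, of "int a" "int b"] unfolding floor_m_def by simp
qed

definition valid :: "nat \<Rightarrow> int list \<Rightarrow> bool" where
  "valid m z \<longleftrightarrow> z \<noteq> [] \<and> z ! 0 = 0 \<and> (\<forall>x\<in>set z. 0 \<le> x) \<and>
     (\<forall>j. Suc j < length z \<longrightarrow> z ! Suc j \<le> Fm m (z ! j))"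

lemma valid_le:
  assumes m: "m > 0" and v: "valid m z"
  shows "j < length z \<Longrightarrow> z ! j \<le> int (m * j)"
proof (induction j)
  case 0 then show ?case using v unfolding valid_def by simp
next
  case (Suc j)
  then have "z ! Suc j \<le> Fm m (z ! j)" using v unfolding valid_def by simp
  then have "z ! Suc j \<le> z ! j + int m" using Fm_le[OF m] order_trans by blast
  then show ?case using Suc by simp
qed

lemma valid_Q: "m > 0 \<Longrightarrow> valid m z \<Longrightarrow> Q m z"
  unfolding Q_def using valid_le by (auto simp: valid_def)

lemma valid_bd_int: "m > 0 \<Longrightarrow> valid m z \<Longrightarrow> j < length z \<Longrightarrow> int (bd m z ! j) = int (m * j) - z ! j"
  using valid_le[of m z j] by (simp add: bd_nth)

lemma valid_rv: assumes m: "m > 0" and v: "valid m z" shows "root_vector m (bd m z) = z"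
  unfolding root_vector_def by (rule nth_equalityI) (auto simp: valid_bd_int[OF m v])

lemma valid_singleton: assumes m: "m > 0" and v: "valid m z" shows "singleton_board m (bd m z)"
proof -
  have P: "int (bd m z ! j) \<le> int (bd m z ! Suc j) \<and>
    (int (bd m z ! j) - floor_m m (int (bd m z ! j)) \<noteq> 0 \<longrightarrow>
       floor_m m (int (bd m z ! j)) < floor_m m (int (bd m z ! Suc j)))" if j: "Suc j < length z" for j
  proof -
    have a: "int (bd m z ! j) = int (m * j) - z ! j" using valid_bd_int[OF m v] j by simp
    have b: "int (bd m z ! Suc j) = int (m * Suc j) - z ! Suc j" using valid_bd_int[OF m v, of "Suc j"] j by simp
    have a': "int (m * j) - int (bd m z ! j) = z ! j" using a by linarith
    have b': "int (m * Suc j) - int (bd m z ! Suc j) = z ! Suc j" using b by linarith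
    have "int (m * Suc j) - int (bd m z ! Suc j) \<le> Fm m (int (m * j) - int (bd m z ! j))"
      unfolding a' b' using j v unfolding valid_def by simp
    then show ?thesis using pairZ[OF m] by blast
  qed
  show ?thesis unfolding singleton_board_def ferrers_def sorted_iff_nth_Suc
    using P by auto
qed

lemma rv_valid:
  assumes m: "m > 0" and s: "singleton_board m B" and nn: "\<forall>x\<in>set (root_vector m B). 0 \<le> x"
    and ne: "B \<noteq> []"
  shows "valid m (root_vector m B)" "bd m (root_vector m B) = B"
proof -
  let ?z = "root_vector m B"
  have len: "length ?z = length B" unfolding root_vector_def by simp
  have zn: "j < length B \<Longrightarrow> ?z ! j = int (m * j) - int (B ! j)" for j unfolding root_vector_def by simp
  have "?z ! 0 \<ge> 0" using nn ne len by (metis length_greater_0_conv nth_mem)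
  then have z0: "?z ! 0 = 0" using zn[of 0] ne by simp
  have "?z ! Suc j \<le> Fm m (?z ! j)" if j: "Suc j < length ?z" for j
  proof -
    have "B ! j \<le> B ! Suc j" using s j len unfolding singleton_board_def ferrers_def sorted_iff_nth_Suc by auto
    moreover have "int (B ! j) - floor_m m (int (B ! j)) \<noteq> 0 \<longrightarrow>
       floor_m m (int (B ! j)) < floor_m m (int (B ! Suc j))" using s j len unfolding singleton_board_def by auto
    ultimately have h: "int (m * Suc j) - int (B ! Suc j) \<le> Fm m (int (m * j) - int (B ! j))"
      using pairZ[OF m, of "B ! j" "B ! Suc j" j] by simp
    have e1: "?z ! Suc j = int (m * Suc j) - int (B ! Suc j)" using zn[of "Suc j"] j len by simp
    have e2: "?z ! j = int (m * j) - int (B ! j)" using zn j len by simp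
    show ?thesis unfolding e1 e2 by (rule h)
  qed
  then show v: "valid m ?z" unfolding valid_def using z0 nn ne len by auto
  show "bd m ?z = B" by (rule nth_equalityI) (auto simp: bd_nth len zn)
qed

definition step :: "nat \<Rightarrow> int list \<Rightarrow> int list \<Rightarrow> bool" where
  "step m z z' \<longleftrightarrow> valid m z \<and> valid m z' \<and>
     (\<exists>p q. p < length z \<and> q < length z \<and> z ! p \<noteq> z ! q \<and> z' = z[p := z ! q, q := z ! p])"

lemma step_mset: "step m z z' \<Longrightarrow> mset z' = mset z"
  unfolding step_def by (auto simp: mset_swap)

lemma steps_mset: "(step m)\<^sup>*\<^sup>* z z' \<Longrightarrow> mset z' = mset z"
  by (induction rule: rtranclp_induct) (auto dest: step_mset)

lemma pad_same: "length X = L \<Longrightarrow> pad L X = X"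
  unfolding pad_def by simp

lemma step_edge:
  assumes m: "m > 0" and st: "step m z z'"
  shows "board_edge (bd m z) (bd m z')"
proof -
  obtain p q where pq: "p < length z" "q < length z" "z ! p \<noteq> z ! q" "z' = z[p := z ! q, q := z ! p]"
    and v: "valid m z" "valid m z'" using st unfolding step_def by blast
  have len: "length z' = length z" using pq by simp
  have pq_ne: "p \<noteq> q" using pq by auto
  have z'p: "z' ! p = z ! q" and z'q: "z' ! q = z ! p" using pq pq_ne by auto
  have z'l: "l \<noteq> p \<Longrightarrow> l \<noteq> q \<Longrightarrow> z' ! l = z ! l" for l using pq by auto
  let ?n = "length z"
  have e1: "int (bd m z ! l) = int (m * l) - z ! l" if "l < ?n" for l using valid_bd_int[OF m v(1) that] .
  have e2: "int (bd m z' ! l) = int (m * l) - z' ! l" if "l < ?n" for l using valid_bd_int[OF m v(2)] that len by simp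
  have key: "\<exists>i j k. i < ?n \<and> j < ?n \<and> i \<noteq> j \<and> k > 0 \<and>
        bd m z ! i = bd m z' ! i + k \<and> bd m z' ! j = bd m z ! j + k \<and>
        (\<forall>l < ?n. l \<noteq> i \<longrightarrow> l \<noteq> j \<longrightarrow> bd m z ! l = bd m z' ! l)"
  proof (cases "z ! p < z ! q")
    case True
    define k where "k = nat (z ! q - z ! p)"
    have "int (bd m z ! p) = int (bd m z' ! p + k)" using e1[of p] e2[of p] pq True z'p unfolding k_def by simp
    moreover have "int (bd m z' ! q) = int (bd m z ! q + k)" using e1[of q] e2[of q] pq True z'q unfolding k_def by simp
    moreover have "\<forall>l < ?n. l \<noteq> p \<longrightarrow> l \<noteq> q \<longrightarrow> int (bd m z ! l) = int (bd m z' ! l)"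
      using e1 e2 z'l by simp
    ultimately show ?thesis using pq pq_ne True unfolding k_def
      by (intro exI[of _ p] exI[of _ q] exI[of _ "nat (z ! q - z ! p)"]) (simp only: of_nat_eq_iff, auto)
  next
    case False
    then have F: "z ! q < z ! p" using pq by simp
    define k where "k = nat (z ! p - z ! q)"
    have "int (bd m z ! q) = int (bd m z' ! q + k)" using e1[of q] e2[of q] pq F z'q unfolding k_def by simp
    moreover have "int (bd m z' ! p) = int (bd m z ! p + k)" using e1[of p] e2[of p] pq F z'p unfolding k_def by simp
    moreover have "\<forall>l < ?n. l \<noteq> p \<longrightarrow> l \<noteq> q \<longrightarrow> int (bd m z ! l) = int (bd m z' ! l)"
      using e1 e2 z'l by simp
    ultimately show ?thesis using pq pq_ne F unfolding k_def
      by (intro exI[of _ q] exI[of _ p] exI[of _ "nat (z ! p - z ! q)"]) (simp only: of_nat_eq_iff, auto)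
  qed
  show ?thesis unfolding board_edge_def Let_def using key len by (simp add: pad_same)
qed



lemma vcount_count: "vcount z k = count (mset z) k"
proof -
  have "count (mset z) k = card {i. i < length z \<and> k = z ! i}"
    unfolding count_mset count_list_eq_length_filter length_filter_conv_card by simp
  also have "\<dots> = vcount z k" unfolding vcount_def by (metis (mono_tags) eq_commute)
  finally show ?thesis by simp
qed

lemma vcount_mset: "mset z' = mset z \<Longrightarrow> vcount z' = vcount z"
  by (rule ext) (simp add: vcount_count)

lemma set_mset_eq: "mset z' = mset z \<Longrightarrow> set z' = set z"
  by (metis set_mset_mset)

lemma vcount_pos: "vcount z x \<ge> 1 \<longleftrightarrow> x \<in> set z"
  by (simp add: vcount_count Suc_le_eq)

lemma vcount_two:
  assumes "j1 < length z" "j2 < length z" "j1 \<noteq> j2" "z ! j1 = x" "z ! j2 = x"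
  shows "vcount z x \<ge> 2"
proof -
  have "{j1, j2} \<subseteq> {j. j < length z \<and> z ! j = x}" using assms by auto
  then have "card {j1, j2} \<le> vcount z x" unfolding vcount_def by (rule card_mono[rotated]) simp
  then show ?thesis using assms(3) by simp
qed

lemma vcount_le1:
  assumes "\<forall>j<length z. z ! j = x \<longrightarrow> j = a"
  shows "vcount z x \<le> 1"
proof -
  have "{j. j < length z \<and> z ! j = x} \<subseteq> {a}" using assms by auto
  then have "vcount z x \<le> card {a}" unfolding vcount_def by (rule card_mono[rotated]) simp
  then show ?thesis by simp
qed

definition prp :: "nat \<Rightarrow> int list \<Rightarrow> int \<Rightarrow> bool" where
  "prp m z x \<longleftrightarrow> vcount z x > 1 \<or> (vcount z x = 1 \<and> \<not> int m dvd x)"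

definition lst :: "nat \<Rightarrow> int list \<Rightarrow> int \<Rightarrow> bool" where
  "lst m z i \<longleftrightarrow> (\<forall>i'. 0 \<le> i' \<and> i' < i \<longrightarrow> \<not> prp m z i')"

definition hS :: "nat \<Rightarrow> int list \<Rightarrow> int \<Rightarrow> bool" where
  "hS m z i \<longleftrightarrow> (\<forall>s. (0 \<le> s \<and> int m dvd s \<and> s < Max (set z) \<and> s > i) \<longrightarrow> vcount z s \<ge> 2)"

definition CC :: "nat \<Rightarrow> int list \<Rightarrow> bool" where
  "CC m z \<longleftrightarrow> (\<forall>i. 0 \<le> i \<and> prp m z i \<and> lst m z i \<longrightarrow> hS m z i)"

lemma inv_mset:
  assumes "mset z' = mset z"
  shows "prp m z' = prp m z" "lst m z' = lst m z" "hS m z' = hS m z" "CC m z' = CC m z"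
proof -
  have v: "vcount z' = vcount z" and s: "set z' = set z" using vcount_mset set_mset_eq assms by blast+
  show p: "prp m z' = prp m z" unfolding prp_def v by simp
  show l: "lst m z' = lst m z" unfolding lst_def p by simp
  show h: "hS m z' = hS m z" unfolding hS_def v s by simp
  show "CC m z' = CC m z" unfolding CC_def p l h by simp
qed

lemma prp_in: "prp m z x \<Longrightarrow> x \<in> set z"
  unfolding prp_def using vcount_pos by (metis less_imp_le_nat One_nat_def Suc_leI order_refl)

lemma AP:
  assumes m: "m > 0" and v: "valid m z"
  shows "k < length z \<Longrightarrow> 0 \<le> s \<Longrightarrow> int m dvd s \<Longrightarrow> s \<le> z ! k \<Longrightarrow> \<exists>j\<le>k. z ! j = s"
proof (induction k)
  case 0
  then have "s = 0" using v unfolding valid_def by simp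
  then show ?case using v unfolding valid_def by auto
next
  case (Suc k)
  show ?case
  proof (cases "s \<le> z ! k")
    case True
    then obtain j where "j \<le> k" "z ! j = s" using Suc by auto
    then show ?thesis by (intro exI[of _ j]) simp
  next
    case False
    have le: "z ! Suc k \<le> Fm m (z ! k)" using v Suc.prems unfolding valid_def by simp
    obtain t where t: "s = int m * t" using Suc.prems by (auto elim: dvdE)
    have "int m * (z ! k div int m) \<le> z ! k" using m
      by (metis mult_div_mod_eq le_add_same_cancel1 of_nat_0_less_iff pos_mod_sign)
    then have "int m * (z ! k div int m) < int m * t" using False t by simp
    then have "z ! k div int m < t" using m by (simp add: mult_less_cancel_left)
    then have "z ! k div int m + 1 \<le> t" by simp
    then have "int m * (z ! k div int m + 1) \<le> int m * t" using m by (simp add: mult_left_mono)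
    then have "Fm m (z ! k) \<le> s" unfolding Fm_def t by (simp add: algebra_simps)
    then have "z ! Suc k = s" using le Suc.prems by simp
    then show ?thesis by auto
  qed
qed

lemma mult_le_floor:
  fixes t w :: int
  assumes m: "m > 0" and "int m dvd t" "t \<le> w"
  shows "t \<le> int m * (w div int m)"
proof -
  obtain a where a: "t = int m * a" using assms(2) by (auto elim: dvdE)
  have "w < int m * (w div int m) + int m" using Fm_gt[OF m] unfolding Fm_def .
  then have "int m * a < int m * (w div int m + 1)" using a assms(3) by (simp add: algebra_simps)
  then have "a < w div int m + 1" using m by (simp add: mult_less_cancel_left)
  then have "a \<le> w div int m" by simp
  then show ?thesis using a m by (simp add: mult_left_mono)
qed

lemma valid_nonneg: "valid m z \<Longrightarrow> j < length z \<Longrightarrow> 0 \<le> z ! j"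
  unfolding valid_def by auto

lemma LI:
  assumes m: "m > 0" and v: "valid m z" and i0: "0 \<le> i" and pi: "prp m z i" and li: "lst m z i"
  shows "i \<le> last z"
proof (rule ccontr)
  assume "\<not> i \<le> last z"
  then have xl: "last z < i" by simp
  let ?n = "length z"
  have ne: "z \<noteq> []" using v unfolding valid_def by simp
  have lastn: "last z = z ! (?n - 1)" using ne by (simp add: last_conv_nth)
  have x0: "0 \<le> last z" using valid_nonneg[OF v, of "?n - 1"] ne lastn by simp
  have "\<not> prp m z (last z)" using li xl x0 unfolding lst_def by blast
  moreover have "last z \<in> set z" using ne by simp
  ultimately have c1: "vcount z (last z) = 1" and dv: "int m dvd last z"
    unfolding prp_def using vcount_pos[of z "last z"] by auto
  obtain k where k: "k < ?n" "z ! k = i" using prp_in[OF pi] by (metis in_set_conv_nth)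
  have "k \<noteq> ?n - 1" using k xl lastn by auto
  then have kl: "k < ?n - 1" using k by simp
  obtain j where j: "j \<le> k" "z ! j = last z" using AP[OF m v k(1) x0 dv] k xl by auto
  have "vcount z (last z) \<ge> 2" using vcount_two[of j z "?n - 1" "last z"] j kl lastn by simp
  then show False using c1 by simp
qed

lemma EXq:
  assumes m: "m > 0" and v: "valid m z" and i0: "0 \<le> i" and pi: "prp m z i" and li: "lst m z i"
    and hs: "hS m z i" and yi: "i < last z"
  shows "\<exists>q. 1 \<le> q \<and> q < length z - 1 \<and> z ! q < last z \<and> last z \<le> Fm m (z ! (q - 1))"
proof (rule ccontr)
  assume no: "\<not> ?thesis"
  let ?n = "length z"
  let ?y = "last z"
  have ne: "z \<noteq> []" using v unfolding valid_def by simp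
  have lastn: "?y = z ! (?n - 1)" using ne by (simp add: last_conv_nth)
  have n2: "?n \<ge> 2"
  proof (rule ccontr)
    assume "\<not> ?n \<ge> 2"
    moreover have "?n \<noteq> 0" using ne by simp
    ultimately have "?n = 1" by linarith
    then have "?y = 0" using v lastn unfolding valid_def by simp
    then show False using yi i0 by simp
  qed
  have yF: "?y \<le> Fm m (z ! (?n - 2))"
  proof -
    have "Suc (?n - 2) < ?n" "Suc (?n - 2) = ?n - 1" using n2 by auto
    then show ?thesis using v lastn unfolding valid_def by metis
  qed
  define a where "a = (LEAST a. ?y \<le> Fm m (z ! a))"
  have aF: "?y \<le> Fm m (z ! a)" unfolding a_def by (rule LeastI[of _ "?n - 2"]) (rule yF)
  have an: "a \<le> ?n - 2" unfolding a_def by (rule Least_le) (rule yF)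
  have small: "j < a \<Longrightarrow> Fm m (z ! j) < ?y" for j unfolding a_def using not_less_Least by force
  have big: "a < j \<Longrightarrow> j < ?n \<Longrightarrow> ?y \<le> z ! j" for j
  proof (induction j)
    case 0 then show ?case by simp
  next
    case (Suc j)
    show ?case
    proof (cases "Suc j = ?n - 1")
      case True then show ?thesis using lastn by simp
    next
      case False
      then have jl: "Suc j < ?n - 1" using Suc.prems by simp
      have "?y \<le> Fm m (z ! j)"
      proof (cases "j = a")
        case True then show ?thesis using aF by simp
      next
        case False
        then have "?y \<le> z ! j" using Suc by simp
        then show ?thesis using Fm_gt[OF m, of "z ! j"] by simp
      qed
      then show ?thesis using no jl by force
    qed
  qed
  define s where "s = int m * ((?y - 1) div int m)"
  have y1: "1 \<le> ?y" using yi i0 by simp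
  have s0: "0 \<le> s" unfolding s_def using y1 m by (simp add: pos_imp_zdiv_nonneg_iff)
  have sd: "int m dvd s" unfolding s_def by simp
  have sy: "s < ?y"
  proof -
    have "s \<le> ?y - 1" unfolding s_def using m
      by (metis mult_div_mod_eq le_add_same_cancel1 of_nat_0_less_iff pos_mod_sign)
    then show ?thesis by simp
  qed
  have lowj: "j < a \<Longrightarrow> z ! j < s" for j
  proof -
    assume "j < a"
    then have "Fm m (z ! j) \<le> ?y - 1" using small by fastforce
    moreover have "int m dvd Fm m (z ! j)" unfolding Fm_def by simp
    ultimately have "Fm m (z ! j) \<le> s" unfolding s_def using mult_le_floor[OF m] by blast
    then show "z ! j < s" using Fm_gt[OF m, of "z ! j"] by simp
  qed
  obtain js where js: "js \<le> ?n - 1" "z ! js = s"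
    using AP[OF m v, of "?n - 1" s] s0 sd sy lastn ne by auto
  have posS: "j < ?n \<Longrightarrow> z ! j = s \<Longrightarrow> j = a" for j
  proof -
    assume j: "j < ?n" "z ! j = s"
    show "j = a"
    proof (rule ccontr)
      assume "j \<noteq> a"
      then have "j < a \<or> a < j" by auto
      then show False
      proof
        assume "j < a" then have "z ! j < s" by (rule lowj)
        with j show False by simp
      next
        assume "a < j" then have "?y \<le> z ! j" using big j(1) by blast
        with j sy show False by simp
      qed
    qed
  qed
  have v1: "vcount z s \<le> 1" by (rule vcount_le1) (use posS in auto)
  have "js < ?n" using js(1) n2 by simp
  then have "js = a" using posS js(2) by blast
  have sM: "s < Max (set z)"
  proof -
    have "?y \<le> Max (set z)" using ne by (intro Max_ge) auto
    then show ?thesis using sy by simp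
  qed
  have si: "s \<le> i"
  proof (rule ccontr)
    assume "\<not> s \<le> i"
    then have "vcount z s \<ge> 2" using hs s0 sd sM unfolding hS_def by auto
    then show False using v1 by simp
  qed
  obtain k where k: "k < ?n" "z ! k = i" using prp_in[OF pi] by (metis in_set_conv_nth)
  have "k = a"
  proof (rule ccontr)
    assume "k \<noteq> a"
    then have "k < a \<or> a < k" by auto
    then show False
    proof
      assume "k < a" then have "z ! k < s" by (rule lowj)
      with k si show False by simp
    next
      assume "a < k" then have "?y \<le> z ! k" using big k(1) by blast
      with k yi show False by simp
    qed
  qed
  have "a < ?n" using an n2 by simp
  then have "i = s" using \<open>k = a\<close> k js \<open>js = a\<close> by simp
  then have "vcount z i \<le> 1" "int m dvd i" using v1 sd by auto
  then show False using pi unfolding prp_def by auto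
qed

lemma SW:
  assumes m: "m > 0" and v: "valid m z" and q1: "1 \<le> q" and qn: "q < length z - 1"
    and zq: "z ! q < last z" and yF: "last z \<le> Fm m (z ! (q - 1))"
  shows "step m z (z[q := z ! (length z - 1), length z - 1 := z ! q])"
proof -
  let ?n = "length z"
  let ?y = "last z"
  let ?z' = "z[q := z ! (?n - 1), ?n - 1 := z ! q]"
  have ne: "z \<noteq> []" using v unfolding valid_def by simp
  have lastn: "?y = z ! (?n - 1)" using ne by (simp add: last_conv_nth)
  have len: "length ?z' = ?n" by simp
  have nth': "l < ?n \<Longrightarrow> ?z' ! l = (if l = ?n - 1 then z ! q else if l = q then ?y else z ! l)" for l
    using qn lastn by auto
  have vz: "\<forall>j. Suc j < ?n \<longrightarrow> z ! Suc j \<le> Fm m (z ! j)" using v unfolding valid_def by simp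
  have pairs: "?z' ! Suc j \<le> Fm m (?z' ! j)" if j: "Suc j < ?n" for j
  proof -
    consider (a) "Suc j = q" | (b) "j = q" | (c) "Suc j = ?n - 1" "j \<noteq> q" | (d) "Suc j \<noteq> q" "j \<noteq> q" "Suc j \<noteq> ?n - 1"
      by blast
    then show ?thesis
    proof cases
      case a
      then have "?z' ! Suc j = ?y" "?z' ! j = z ! (q - 1)" using nth' j qn lastn by auto
      then show ?thesis using yF by simp
    next
      case b
      show ?thesis
      proof (cases "Suc j = ?n - 1")
        case True
        then have "?z' ! Suc j = z ! q" "?z' ! j = ?y" using nth' j b qn lastn by auto
        then show ?thesis using zq Fm_gt[OF m, of ?y] by simp
      next
        case False
        then have "?z' ! Suc j = z ! Suc q" "?z' ! j = ?y" using nth' j b qn lastn by auto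
        moreover have "z ! Suc q \<le> Fm m (z ! q)" using vz j b by simp
        moreover have "Fm m (z ! q) \<le> Fm m ?y" using Fm_mono[OF m] zq by simp
        ultimately show ?thesis by simp
      qed
    next
      case c
      then have "?z' ! Suc j = z ! q" "?z' ! j = z ! j" using nth' j qn by auto
      moreover have "?y \<le> Fm m (z ! j)" using vz c lastn j by (metis)
      ultimately show ?thesis using zq by simp
    next
      case d
      then have "?z' ! Suc j = z ! Suc j" "?z' ! j = z ! j" using nth' j qn by auto
      then show ?thesis using vz j by simp
    qed
  qed
  have "set ?z' \<subseteq> set z"
  proof
    fix x assume "x \<in> set ?z'"
    then obtain l where l: "l < ?n" "?z' ! l = x" using len by (metis in_set_conv_nth)
    have "q < ?n" using qn by simp
    then show "x \<in> set z" using l nth'[OF l(1)] ne lastn by (auto split: if_splits)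
  qed
  then have vz': "valid m ?z'" using v pairs q1 qn nth'[of 0] unfolding valid_def by auto
  have "z ! q \<noteq> z ! (?n - 1)" using zq lastn by simp
  then show ?thesis unfolding step_def using v vz' qn by (intro conjI exI[of _ q] exI[of _ "?n - 1"]) auto
qed

lemma step_valid: "step m z z' \<Longrightarrow> valid m z'"
  unfolding step_def by simp

lemma steps_valid: "(step m)\<^sup>*\<^sup>* z z' \<Longrightarrow> valid m z \<Longrightarrow> valid m z'"
  by (induction rule: rtranclp_induct) (auto dest: step_valid)

lemma Reach:
  assumes m: "m > 0" and i0: "0 \<le> i"
  shows "valid m z \<Longrightarrow> prp m z i \<Longrightarrow> lst m z i \<Longrightarrow> hS m z i \<Longrightarrow> \<exists>z1. (step m)\<^sup>*\<^sup>* z z1 \<and> last z1 = i"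
proof (induction "nat (last z)" arbitrary: z rule: less_induct)
  case less
  have il: "i \<le> last z" using LI[OF m less.prems(1) i0 less.prems(2,3)] .
  show ?case
  proof (cases "last z = i")
    case True then show ?thesis by blast
  next
    case False
    then have yi: "i < last z" using il by simp
    obtain q where q: "1 \<le> q" "q < length z - 1" "z ! q < last z" "last z \<le> Fm m (z ! (q - 1))"
      using EXq[OF m less.prems(1) i0 less.prems(2,3,4) yi] by blast
    define z' where "z' = z[q := z ! (length z - 1), length z - 1 := z ! q]"
    have st: "step m z z'" unfolding z'_def by (rule SW[OF m less.prems(1) q])
    have ms: "mset z' = mset z" using step_mset[OF st] .
    have ne: "z \<noteq> []" using less.prems(1) unfolding valid_def by simp
    have "last z' = z ! q" unfolding z'_def using ne q(2)
      by (simp add: last_conv_nth)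
    moreover have "0 \<le> z ! q" using valid_nonneg[OF less.prems(1)] q(2) by simp
    ultimately have lt: "nat (last z') < nat (last z)" using q(3) by simp
    have "valid m z'" using st by (rule step_valid)
    moreover have "prp m z' i" "lst m z' i" "hS m z' i" using inv_mset[OF ms] less.prems(2,3,4) by simp_all
    ultimately obtain z1 where z1: "(step m)\<^sup>*\<^sup>* z' z1" "last z1 = i" using less.hyps[OF lt] by blast
    have "(step m)\<^sup>*\<^sup>* z z1" using st z1(1) by (rule converse_rtranclp_into_rtranclp)
    then show ?thesis using z1(2) by blast
  qed
qed

definition PP :: "nat \<Rightarrow> int list \<Rightarrow> bool" where
  "PP m z \<longleftrightarrow> (let M = Max (set z); K = nat (floor_m m (M - 1) div int m + 1) in
     K < length z \<and> (\<forall>j<K. z ! j = int (m * j)) \<and> z ! K = M)"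

lemma Kchar:
  assumes m: "m > 0" and M0: "0 < M" and lo: "int m * (int K' - 1) < M" and hi: "M \<le> int m * int K'"
  shows "nat (floor_m m (M - 1) div int m + 1) = K'"
proof -
  have mz: "int m \<noteq> 0" using m by simp
  have "floor_m m (M - 1) div int m = (M - 1) div int m" unfolding floor_m_def using mz by simp
  also have "(M - 1) div int m = int K' - 1"
  proof -
    define r where "r = M - 1 - int m * (int K' - 1)"
    have e: "M - 1 = int m * (int K' - 1) + r" unfolding r_def by simp
    have "0 \<le> r" using lo unfolding r_def by simp
    moreover have "r < int m" using hi unfolding r_def by (simp add: algebra_simps)
    ultimately have "(int m * (int K' - 1) + r) div int m = int K' - 1" by (rule div_decomp)
    then show ?thesis unfolding e .
  qed
  finally show ?thesis by simp
qed

lemma Kzero: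
  assumes m: "m > 0"
  shows "nat (floor_m m (0 - 1) div int m + 1) = 0"
proof -
  have mz: "int m \<noteq> 0" using m by simp
  have "(-1::int) = int m * (-1) + (int m - 1)" by simp
  then have "(-1::int) div int m = -1" using div_decomp[of "int m - 1" "int m" "-1"] m by simp
  then have f: "floor_m m (0 - 1) = int m * (-1)" unfolding floor_m_def by simp
  have "(int m * (-1)) div int m = -1" by (rule nonzero_mult_div_cancel_left[OF mz])
  then show ?thesis unfolding f by simp
qed

lemma Fm_mult: "m > 0 \<Longrightarrow> Fm m (int m * t) = int m * t + int m"
  unfolding Fm_def by simp

lemma D:
  assumes m: "m > 0" and v: "valid m w" and deg: "\<forall>x. 0 \<le> x \<longrightarrow> \<not> prp m w x"
  shows "j < length w \<Longrightarrow> w ! j = int (m * j)"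
proof (induction j rule: less_induct)
  case (less j)
  have fact: "x \<in> set w \<Longrightarrow> vcount w x = 1 \<and> int m dvd x" for x
  proof -
    assume x: "x \<in> set w"
    then have "0 \<le> x" using v unfolding valid_def by auto
    then have "\<not> prp m w x" using deg by simp
    then show ?thesis using vcount_pos[of w x] x unfolding prp_def by auto
  qed
  show ?case
  proof (cases j)
    case 0 then show ?thesis using v unfolding valid_def by simp
  next
    case (Suc j')
    have ih: "w ! j' = int (m * j')" using less Suc by simp
    have "w ! j \<le> Fm m (w ! j')" using v less.prems Suc unfolding valid_def by simp
    then have up: "w ! j \<le> int m * int j' + int m" using ih Fm_mult[OF m] by simp
    have wj: "w ! j \<in> set w" using less.prems by simp
    then obtain t where t: "w ! j = int m * t" using fact by (auto elim: dvdE)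
    have "0 \<le> w ! j" using valid_nonneg[OF v less.prems] .
    then have t0: "0 \<le> t" using t m by (simp add: zero_le_mult_iff)
    have "t \<le> int j"
    proof -
      have "int m * t \<le> int m * (int j' + 1)" using up t by (simp add: algebra_simps)
      then have "t \<le> int j' + 1" using m by (simp add: mult_le_cancel_left)
      then show ?thesis using Suc by simp
    qed
    moreover have "\<not> t < int j"
    proof
      assume tj: "t < int j"
      define tn where "tn = nat t"
      have tn: "tn < j" "int tn = t" using tj t0 unfolding tn_def by auto
      then have "w ! tn = int (m * tn)" using less by simp
      then have "w ! tn = w ! j" using t tn by simp
      then have "vcount w (w ! j) \<ge> 2" using vcount_two[of tn w j "w ! j"] tn less.prems by simp
      then show False using fact[OF wj] by simp
    qed
    ultimately have "t = int j" by simp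
    then show ?thesis using t by simp
  qed
qed

lemma PP_deg:
  assumes m: "m > 0" and v: "valid m w" and deg: "\<forall>x. 0 \<le> x \<longrightarrow> \<not> prp m w x"
  shows "PP m w"
proof -
  let ?n = "length w"
  have ne: "w \<noteq> []" using v unfolding valid_def by simp
  have wj: "j < ?n \<Longrightarrow> w ! j = int (m * j)" for j using D[OF m v deg] .
  have Mx: "Max (set w) = int (m * (?n - 1))"
  proof (rule Max_eqI)
    show "finite (set w)" by simp
    show "y \<le> int (m * (?n - 1))" if yw: "y \<in> set w" for y
    proof -
      obtain j where j: "j < ?n" "w ! j = y" using yw by (metis in_set_conv_nth)
      then have "j \<le> ?n - 1" by simp
      then have "m * j \<le> m * (?n - 1)" by (rule mult_le_mono2)
      then have "int (m * j) \<le> int (m * (?n - 1))" by (simp only: of_nat_le_iff)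
      then show ?thesis using j wj[of j] by (simp only:)
    qed
    have "?n - 1 < ?n" using ne by simp
    then have mem: "w ! (?n - 1) \<in> set w" by (rule nth_mem)
    have e: "w ! (?n - 1) = int (m * (?n - 1))" using wj \<open>?n - 1 < ?n\<close> by blast
    from mem show "int (m * (?n - 1)) \<in> set w" unfolding e .
  qed
  define K where "K = nat (floor_m m (Max (set w) - 1) div int m + 1)"
  have KK: "K = ?n - 1"
  proof (cases "?n = 1")
    case True
    then have "Max (set w) = 0" using Mx by simp
    then show ?thesis unfolding K_def using Kzero[OF m] True by simp
  next
    case False
    moreover have "?n \<noteq> 0" using ne by simp
    ultimately have n2: "?n \<ge> 2" by linarith
    show ?thesis unfolding K_def
    proof (rule Kchar[OF m])
      show "0 < Max (set w)" unfolding Mx using n2 m by simp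
      have "int m * (int (?n - 1) - 1) < int m * int (?n - 1)" using m by simp
      then show "int m * (int (?n - 1) - 1) < Max (set w)" unfolding Mx by simp
      show "Max (set w) \<le> int m * int (?n - 1)" unfolding Mx by simp
    qed
  qed
  have "K < ?n" unfolding KK using ne by simp
  moreover have "\<forall>j<K. w ! j = int (m * j)" unfolding KK using wj by simp
  moreover have "w ! K = Max (set w)" unfolding KK Mx using wj[of "?n - 1"] ne by simp
  ultimately show ?thesis unfolding PP_def Let_def K_def[symmetric] by blast
qed

lemma valid_snoc:
  assumes v: "valid m u" and i0: "0 \<le> i" and iF: "i \<le> Fm m (last u)"
  shows "valid m (u @ [i])"
proof -
  have ne: "u \<noteq> []" using v unfolding valid_def by simp
  have "(u @ [i]) ! Suc j \<le> Fm m ((u @ [i]) ! j)" if j: "Suc j < length (u @ [i])" for j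
  proof (cases "Suc j < length u")
    case True then show ?thesis using v unfolding valid_def by (simp add: nth_append)
  next
    case False
    then have "Suc j = length u" using j by simp
    then have "j = length u - 1" by simp
    then show ?thesis using iF ne \<open>Suc j = length u\<close> by (simp add: nth_append last_conv_nth)
  qed
  then show ?thesis using v i0 ne unfolding valid_def by (auto simp: nth_append)
qed

lemma valid_butlast:
  assumes v: "valid m (u @ [i])" and ne: "u \<noteq> []"
  shows "valid m u"
proof -
  have "u ! Suc j \<le> Fm m (u ! j)" if j: "Suc j < length u" for j
  proof -
    have "(u @ [i]) ! Suc j \<le> Fm m ((u @ [i]) ! j)" using v j unfolding valid_def by simp
    then show ?thesis using j by (simp add: nth_append)
  qed
  then show ?thesis using v ne unfolding valid_def by (auto simp: nth_append)
qed

lemma lift_step: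
  assumes st: "step m u u'" and i0: "0 \<le> i" and f1: "i \<le> Fm m (last u)" and f2: "i \<le> Fm m (last u')"
  shows "step m (u @ [i]) (u' @ [i])"
proof -
  obtain p q where pq: "p < length u" "q < length u" "u ! p \<noteq> u ! q" "u' = u[p := u ! q, q := u ! p]"
    and v: "valid m u" "valid m u'" using st unfolding step_def by blast
  have "u' @ [i] = (u @ [i])[p := (u @ [i]) ! q, q := (u @ [i]) ! p]"
    using pq by (simp add: nth_append list_update_append)
  then show ?thesis unfolding step_def using valid_snoc[OF v(1) i0 f1] valid_snoc[OF v(2) i0 f2] pq
    by (intro conjI exI[of _ p] exI[of _ q]) (auto simp: nth_append)
qed

lemma lift_steps:
  assumes ss: "(step m)\<^sup>*\<^sup>* w w'" and i0: "0 \<le> i"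
    and c: "\<forall>u. valid m u \<and> mset u = mset w \<longrightarrow> i \<le> Fm m (last u)"
  shows "(step m)\<^sup>*\<^sup>* (w @ [i]) (w' @ [i])"
  using ss
proof (induction rule: rtranclp_induct)
  case base then show ?case by simp
next
  case (step u u')
  have m1: "mset u = mset w" using steps_mset[OF step.hyps(1)] .
  have m2: "mset u' = mset w" using step_mset[OF step.hyps(2)] m1 by simp
  have v: "valid m u" "valid m u'" using step.hyps(2) unfolding step_def by auto
  have "step m (u @ [i]) (u' @ [i])" using lift_step[OF step.hyps(2) i0] c v m1 m2 by blast
  with step.IH show ?case by (rule rtranclp.rtrancl_into_rtrancl)
qed



lemma vcount_snoc: "vcount (w @ [i]) x = vcount w x + (if x = i then 1 else 0)"
  unfolding vcount_count by simp

lemma Lcond: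
  assumes m: "m > 0" and v1: "valid m (w @ [i])" and ne: "w \<noteq> []" and i0: "0 \<le> i"
    and pi: "prp m (w @ [i]) i" and li: "lst m (w @ [i]) i"
    and vu: "valid m u" and mu: "mset u = mset w"
  shows "i \<le> Fm m (last u)"
proof (rule ccontr)
  assume "\<not> i \<le> Fm m (last u)"
  then have Fi: "Fm m (last u) < i" by simp
  let ?z1 = "w @ [i]"
  let ?x = "last u"
  have une: "u \<noteq> []" using vu unfolding valid_def by simp
  have lastn: "?x = u ! (length u - 1)" using une by (simp add: last_conv_nth)
  have x0: "0 \<le> ?x" using valid_nonneg[OF vu, of "length u - 1"] une lastn by simp
  have xi: "?x < i" using Fi Fm_gt[OF m, of ?x] by simp
  have su: "set u = set w" using set_mset_eq[OF mu] .
  have "?x \<in> set u" using une by simp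
  then have xz: "?x \<in> set ?z1" using su by simp
  have "\<not> prp m ?z1 ?x" using li x0 xi unfolding lst_def by blast
  then have c1: "vcount ?z1 ?x = 1" and dx: "int m dvd ?x"
    using vcount_pos[of ?z1 ?x] xz unfolding prp_def by auto
  define t where "t = int m * (i div int m)"
  have "int m dvd Fm m ?x" unfolding Fm_def by simp
  then have "Fm m ?x \<le> t" unfolding t_def using mult_le_floor[OF m] Fi by simp
  then have xt: "?x < t" using Fm_gt[OF m, of ?x] by simp
  have t0: "0 \<le> t" unfolding t_def using i0 m by (simp add: pos_imp_zdiv_nonneg_iff)
  have td: "int m dvd t" unfolding t_def by simp
  have ti: "t \<le> i"
  proof -
    have "int m * (i div int m) + i mod int m = i" by (rule mult_div_mod_eq)
    moreover have "0 \<le> i mod int m" using m by simp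
    ultimately show ?thesis unfolding t_def by linarith
  qed
  have tw: "t \<in> set w"
  proof (cases "t = i")
    case True
    then have "int m dvd i" using td by simp
    then have "vcount ?z1 i > 1" using pi unfolding prp_def by auto
    then have "vcount w i \<ge> 1" using vcount_snoc[of w i i] by simp
    then show ?thesis using True vcount_pos by simp
  next
    case False
    have "length ?z1 - 1 < length ?z1" by simp
    moreover have "?z1 ! (length ?z1 - 1) = i" by simp
    ultimately obtain j where "j \<le> length ?z1 - 1" "?z1 ! j = t"
      using AP[OF m v1, of "length ?z1 - 1" t] t0 td ti by auto
    then have "t \<in> set ?z1" by (metis diff_less le_less_trans length_greater_0_conv nth_mem snoc_eq_iff_butlast zero_less_one)
    then show ?thesis using False by simp
  qed
  then obtain k where k: "k < length u" "u ! k = t" using su by (metis in_set_conv_nth)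
  have kl: "k \<noteq> length u - 1" using k xt lastn by auto
  obtain j where j: "j \<le> k" "u ! j = ?x" using AP[OF m vu k(1) x0 dx] k xt by auto
  have "j \<noteq> length u - 1" using j kl k by simp
  then have "vcount u ?x \<ge> 2" using vcount_two[of j u "length u - 1" ?x] j k lastn une by simp
  then have "vcount w ?x \<ge> 2" using vcount_mset[OF mu] by simp
  then have "vcount ?z1 ?x \<ge> 2" using vcount_snoc[of w i ?x] by simp
  then show False using c1 by simp
qed

lemma MAIN:
  assumes m: "m > 0"
  shows "valid m z \<Longrightarrow> CC m z \<Longrightarrow> \<exists>z'. (step m)\<^sup>*\<^sup>* z z' \<and> PP m z'"
proof (induction "length z" arbitrary: z rule: less_induct)
  case less
  note v = less.prems(1) and cc = less.prems(2)
  show ?case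
  proof (cases "\<exists>x. 0 \<le> x \<and> prp m z x")
    case False
    then have "PP m z" using PP_deg[OF m v] by blast
    then show ?thesis by blast
  next
    case True
    then obtain x0 where x0: "0 \<le> x0" "prp m z x0" by blast
    define N where "N = (LEAST N::nat. prp m z (int N))"
    have pN: "prp m z (int N)" unfolding N_def by (rule LeastI[of _ "nat x0"]) (use x0 in simp)
    define i where "i = int N"
    have i0: "0 \<le> i" unfolding i_def by simp
    have pi: "prp m z i" using pN unfolding i_def .
    have li: "lst m z i" unfolding lst_def
    proof (intro allI impI)
      fix i' assume h: "0 \<le> i' \<and> i' < i"
      then have "nat i' < N" unfolding i_def by linarith
      then have "\<not> prp m z (int (nat i'))" unfolding N_def by (rule not_less_Least)
      then show "\<not> prp m z i'" using h by simp
    qed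
    have hs: "hS m z i" using cc i0 pi li unfolding CC_def by blast
    obtain z1 where z1: "(step m)\<^sup>*\<^sup>* z z1" "last z1 = i" using Reach[OF m i0 v pi li hs] by blast
    have ms1: "mset z1 = mset z" using steps_mset[OF z1(1)] .
    have v1: "valid m z1" using steps_valid[OF z1(1) v] .
    have len1: "length z1 = length z" using ms1 by (metis size_mset)
    have pi1: "prp m z1 i" and li1: "lst m z1 i" and hs1: "hS m z1 i"
      using inv_mset[OF ms1] pi li hs by simp_all
    have ne1: "z1 \<noteq> []" using v1 unfolding valid_def by simp
    define w where "w = butlast z1"
    have z1w: "z1 = w @ [i]" unfolding w_def using append_butlast_last_id[OF ne1] z1(2) by simp
    have wne: "w \<noteq> []"
    proof
      assume "w = []"
      then have "z1 = [i]" using z1w by simp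
      then have "i = 0" using v1 unfolding valid_def by simp
      then have "vcount z1 i = 1" using \<open>z1 = [i]\<close> unfolding vcount_count by simp
      then show False using pi1 \<open>i = 0\<close> unfolding prp_def by simp
    qed
    have vw: "valid m w" using valid_butlast[OF v1[unfolded z1w] wne] .
    have vc: "vcount z1 x = vcount w x + (if x = i then 1 else 0)" for x
      unfolding z1w by (rule vcount_snoc)
    have setz1: "set z1 = insert i (set w)" unfolding z1w by simp
    let ?M = "Max (set z1)"
    have iM: "i \<le> ?M" using setz1 by simp
    show ?thesis
    proof (cases "i = ?M \<and> vcount z1 i = 1")
      case True
      have t1: "vcount z1 i = 1" using True by blast
      have "vcount w i = 0" using t1 vc[of i] by simp
      then have iw: "i \<notin> set w" using vcount_pos[of w i] by simp
      have deg: "\<forall>x. 0 \<le> x \<longrightarrow> \<not> prp m w x"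
      proof (intro allI impI notI)
        fix x assume x0: "0 \<le> x" and px: "prp m w x"
        have xw: "x \<in> set w" using prp_in[OF px] .
        then have "x \<noteq> i" using iw by auto
        moreover have "x \<le> ?M" using xw setz1 by simp
        ultimately have "x < i" using True by simp
        then have "\<not> prp m z1 x" using li1 x0 unfolding lst_def by blast
        moreover have "vcount z1 x = vcount w x" using vc[of x] \<open>x \<noteq> i\<close> by simp
        ultimately show False using px unfolding prp_def by simp
      qed
      let ?k = "length w"
      have k1: "?k \<ge> 1" using wne by (cases w) auto
      have lz1: "length z1 = ?k + 1" unfolding z1w by simp
      have wj: "j < ?k \<Longrightarrow> w ! j = int (m * j)" for j using D[OF m vw deg] by simp
      have z1j: "j < ?k \<Longrightarrow> z1 ! j = w ! j" for j unfolding z1w by (simp add: nth_append)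
      have z1n: "z1 ! ?k = i" unfolding z1w by simp
      have "Suc (?k - 1) < length z1" using lz1 k1 by simp
      then have "z1 ! Suc (?k - 1) \<le> Fm m (z1 ! (?k - 1))" using v1 unfolding valid_def by blast
      moreover have "Suc (?k - 1) = ?k" using k1 by simp
      moreover have "z1 ! (?k - 1) = int m * int (?k - 1)" using z1j[of "?k - 1"] wj[of "?k - 1"] k1 by simp
      ultimately have ihi: "i \<le> int m * int (?k - 1) + int m" using z1n Fm_mult[OF m] by simp
      have "?k - 1 < ?k" using k1 by simp
      then have mem: "w ! (?k - 1) \<in> set w" by (rule nth_mem)
      have e: "w ! (?k - 1) = int (m * (?k - 1))" using wj \<open>?k - 1 < ?k\<close> by blast
      have ce: "int (m * (?k - 1)) = int m * int (?k - 1)" by (simp only: of_nat_mult)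
      from mem have wl: "int m * int (?k - 1) \<in> set w" unfolding e ce .
      then have "int m * int (?k - 1) \<le> ?M" using setz1 by simp
      moreover have "int m * int (?k - 1) \<noteq> i" using wl iw by auto
      ultimately have ilo: "int m * int (?k - 1) < i" using True by simp
      have Mi: "?M = i" using True by simp
      have K: "nat (floor_m m (?M - 1) div int m + 1) = ?k"
      proof (rule Kchar[OF m])
        have nn: "0 \<le> int m * int (?k - 1)" by simp
        show "0 < ?M" using ilo Mi nn by linarith
        have e1: "int m * (int ?k - 1) = int m * int (?k - 1)" using k1 by (simp add: of_nat_diff)
        show "int m * (int ?k - 1) < ?M" using ilo Mi e1 by linarith
        have e2: "int m * int ?k = int m * int (?k - 1) + int m" using k1 by (simp add: of_nat_diff algebra_simps)
        show "?M \<le> int m * int ?k" using ihi Mi e2 by linarith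
      qed
      have "?k < length z1" using lz1 by simp
      moreover have "\<forall>j<?k. z1 ! j = int (m * j)" using z1j wj by simp
      moreover have "z1 ! ?k = ?M" using z1n Mi by simp
      ultimately have "PP m z1" unfolding PP_def Let_def K by blast
      then show ?thesis using z1(1) by blast
    next
      case False
      have Mw: "?M \<in> set w"
      proof (cases "?M = i")
        case True
        then have "vcount z1 i \<noteq> 1" using False by simp
        moreover have "vcount z1 i \<ge> 1" using vcount_pos[of z1 i] setz1 by simp
        ultimately have "vcount w i \<ge> 1" using vc[of i] by simp
        then show ?thesis using True vcount_pos by simp
      next
        case False
        have "?M \<in> set z1" using ne1 by simp
        then show ?thesis using False setz1 by simp
      qed
      have Mweq: "Max (set w) = ?M"
      proof (rule antisym)
        show "Max (set w) \<le> ?M" using wne setz1 by (simp add: Max_mono)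
        show "?M \<le> Max (set w)" using Mw by simp
      qed
      have ccw: "CC m w" unfolding CC_def
      proof (intro allI impI)
        fix i' assume h: "0 \<le> i' \<and> prp m w i' \<and> lst m w i'"
        have ii': "i \<le> i'"
        proof (rule ccontr)
          assume "\<not> i \<le> i'"
          then have "\<not> prp m z1 i'" using li1 h unfolding lst_def by auto
          moreover have "vcount z1 i' = vcount w i'" using vc[of i'] \<open>\<not> i \<le> i'\<close> by simp
          ultimately show False using h unfolding prp_def by simp
        qed
        show "hS m w i'" unfolding hS_def
        proof (intro allI impI)
          fix s assume s: "0 \<le> s \<and> int m dvd s \<and> s < Max (set w) \<and> i' < s"
          then have "vcount z1 s \<ge> 2" using hs1 ii' Mweq unfolding hS_def by auto
          then show "vcount w s \<ge> 2" using vc[of s] s ii' by simp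
        qed
      qed
      have "length w < length z" using len1 unfolding z1w by simp
      then obtain w' where w': "(step m)\<^sup>*\<^sup>* w w'" "PP m w'" using less.hyps vw ccw by blast
      have c: "\<forall>u. valid m u \<and> mset u = mset w \<longrightarrow> i \<le> Fm m (last u)"
        using Lcond[OF m v1[unfolded z1w] wne i0] pi1 li1 unfolding z1w by blast
      have lift: "(step m)\<^sup>*\<^sup>* z1 (w' @ [i])" unfolding z1w using lift_steps[OF w'(1) i0 c] .
      have msw': "mset w' = mset w" using steps_mset[OF w'(1)] .
      have sw': "set w' = set w" using set_mset_eq[OF msw'] .
      have w'ne: "w' \<noteq> []" using sw' wne by auto
      have Mw': "Max (set w') = ?M" using sw' Mweq by simp
      have Mfin: "Max (set (w' @ [i])) = ?M"
      proof -
        have "set (w' @ [i]) = insert i (set w')" by simp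
        then have "Max (set (w' @ [i])) = max i (Max (set w'))" using w'ne by (simp add: Max_insert)
        then show ?thesis using Mw' iM by simp
      qed
      obtain K where K: "K = nat (floor_m m (?M - 1) div int m + 1)" by blast
      have pp: "K < length w' \<and> (\<forall>j<K. w' ! j = int (m * j)) \<and> w' ! K = ?M"
        using w'(2) unfolding PP_def Let_def Mw' K[symmetric] .
      then have p1: "K < length w'" and p2: "\<forall>j<K. w' ! j = int (m * j)" and p3: "w' ! K = ?M"
        by blast+
      have q1: "K < length (w' @ [i])" using p1 by simp
      have q2: "\<forall>j<K. (w' @ [i]) ! j = int (m * j)" using p1 p2 by (simp add: nth_append)
      have q3: "(w' @ [i]) ! K = ?M" using p1 p3 by (simp add: nth_append)
      have "PP m (w' @ [i])" unfolding PP_def Let_def Mfin K[symmetric] using q1 q2 q3 by blast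
      moreover have "(step m)\<^sup>*\<^sup>* z (w' @ [i])" using z1(1) lift by (rule rtranclp_trans)
      ultimately show ?thesis by blast
    qed
  qed
qed

lemma steps_G:
  assumes m: "m > 0" and v0: "valid m z0" and bz: "bd m z0 = B"
  shows "(step m)\<^sup>*\<^sup>* z0 z \<Longrightarrow> (G_edge m B)\<^sup>*\<^sup>* B (bd m z)"
proof (induction rule: rtranclp_induct)
  case base then show ?case using bz by simp
next
  case (step u u')
  have mu: "mset u = mset z0" using steps_mset[OF step.hyps(1)] .
  have mu': "mset u' = mset z0" using step_mset[OF step.hyps(2)] mu by simp
  have vu: "valid m u" and vu': "valid m u'" using step.hyps(2) unfolding step_def by auto
  have Q0: "Q m z0" using valid_Q[OF m v0] .
  have "G_vertex m B (bd m u)" unfolding G_vertex_def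
    using valid_singleton[OF m vu] rook_equiv_Q[OF m valid_Q[OF m vu] Q0 mu] bz by simp
  moreover have "G_vertex m B (bd m u')" unfolding G_vertex_def
    using valid_singleton[OF m vu'] rook_equiv_Q[OF m valid_Q[OF m vu'] Q0 mu'] bz by simp
  moreover have "board_edge (bd m u) (bd m u')" using step_edge[OF m step.hyps(2)] .
  ultimately have "G_edge m B (bd m u) (bd m u')" unfolding G_edge_def by simp
  with step.IH show ?case by (rule rtranclp.rtrancl_into_rtrancl)
qed

theorem lemma20:
  fixes m :: nat and B :: "nat list" and i :: int
  assumes m_pos: "m > 0"
    and sing: "singleton_board m B"
    and nonempty: "B \<noteq> []"
    and nonneg: "\<forall>z \<in> set (root_vector m B). z \<ge> 0"
    and i_nonneg: "i \<ge> 0"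
    and i_prop: "vcount (root_vector m B) i > 1 \<or>
                 (vcount (root_vector m B) i = 1 \<and> \<not> int m dvd i)"
    and i_least: "\<forall>i'. 0 \<le> i' \<and> i' < i \<longrightarrow>
                 \<not> (vcount (root_vector m B) i' > 1 \<or>
                    (vcount (root_vector m B) i' = 1 \<and> \<not> int m dvd i'))"
    and hypS: "\<forall>s. (0 \<le> s \<and> int m dvd s \<and> s < Max (set (root_vector m B)) \<and> s > i)
                 \<longrightarrow> vcount (root_vector m B) s \<ge> 2"
  shows "\<exists>B'. length B' = length B \<and> (G_edge m B)\<^sup>*\<^sup>* B B' \<and>
           (let M = Max (set (root_vector m B));
                K = nat (floor_m m (M - 1) div int m + 1) in
            K < length B' \<and>
            (\<forall>j < K. root_vector m B' ! j = int (m * j)) \<and>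
            root_vector m B' ! K = M)"
proof -
  let ?z0 = "root_vector m B"
  have v0: "valid m ?z0" and bz: "bd m ?z0 = B" using rv_valid[OF m_pos sing nonneg nonempty] by auto
  have cc: "CC m ?z0" unfolding CC_def
  proof (intro allI impI)
    fix i' assume h: "0 \<le> i' \<and> prp m ?z0 i' \<and> lst m ?z0 i'"
    have "i' = i"
    proof (rule ccontr)
      assume "i' \<noteq> i"
      then have "i' < i \<or> i < i'" by auto
      then show False
      proof
        assume "i' < i"
        then show False using i_least h unfolding prp_def by blast
      next
        assume "i < i'"
        then show False using h i_prop i_nonneg unfolding lst_def prp_def by blast
      qed
    qed
    then show "hS m ?z0 i'" using hypS unfolding hS_def by simp
  qed
  obtain z' where z': "(step m)\<^sup>*\<^sup>* ?z0 z'" "PP m z'" using MAIN[OF m_pos v0 cc] by blast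
  have vz': "valid m z'" using steps_valid[OF z'(1) v0] .
  have ms: "mset z' = mset ?z0" using steps_mset[OF z'(1)] .
  have len: "length z' = length ?z0" using ms by (metis size_mset)
  have rv': "root_vector m (bd m z') = z'" using valid_rv[OF m_pos vz'] .
  have Mx: "Max (set (root_vector m B)) = Max (set z')" using set_mset_eq[OF ms] by simp
  have G: "(G_edge m B)\<^sup>*\<^sup>* B (bd m z')" using steps_G[OF m_pos v0 bz z'(1)] .
  have l: "length (bd m z') = length B" using len unfolding root_vector_def by simp
  show ?thesis
    apply (rule exI[of _ "bd m z'"])
    using G l z'(2) unfolding PP_def Let_def rv' Mx by simp
qed

end
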